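(* Let $A$ be a finitely generated abelian group with a finite generating subset $S$. There exists a constant $C>0$ such that for every subgroup $H\le A$, $\det(H)\le C(\|H\|_S)^{\mathrm{rank}_{\mathbb{Z}}(H)}$.
   Context: $\|\cdot\|_S$ is word length; for a subgroup $H$, $\|H\|_S=\min\{\max_{h\in X}\|h\|_S: X\text{ a finite generating subset of }H\}$. $\sqrt[A]{H}=\{a\in A:a^m\in H\text{ for some } m\ge1\}$ and $\det(H)=[\sqrt[A]{H}:H]$. $\mathrm{rank}_{\mathbb{Z}}$ is torsion-free rank. *)

theory Defs
  imports Complex_Main
begin

text \<open>The ambient finitely generated abelian group A is the whole type 'a::ab_group_add.\<close>

definition subgrp :: "'a::ab_group_add set \<Rightarrow> bool" where
  "subgrp H \<longleftrightarrow> 0 \<in> H \<and> (\<forall>x\<in>H. \<forall>y\<in>H. x + y \<in> H) \<and> (\<forall>x\<in>H. - x \<in> H)"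

definition gen :: "'a::ab_group_add set \<Rightarrow> 'a set" where
  "gen X = \<Inter> {H. subgrp H \<and> X \<subseteq> H}"

primrec nsmul :: "nat \<Rightarrow> 'a::ab_group_add \<Rightarrow> 'a" where
  "nsmul 0 a = 0"
| "nsmul (Suc n) a = a + nsmul n a"

definition zsmul :: "int \<Rightarrow> 'a::ab_group_add \<Rightarrow> 'a" where
  "zsmul k a = (if 0 \<le> k then nsmul (nat k) a else - nsmul (nat (- k)) a)"

definition wordlen :: "'a::ab_group_add set \<Rightarrow> 'a \<Rightarrow> nat" where
  "wordlen S a = (LEAST n. \<exists>xs. length xs = n \<and> set xs \<subseteq> S \<union> uminus ` S \<and> sum_list xs = a)"

text \<open>||H||_S: minimum over finite generating sets X of H of the maximal word length in X
  (the maximum over the empty set being 0).\<close>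
definition subgrp_norm :: "'a::ab_group_add set \<Rightarrow> 'a set \<Rightarrow> nat" where
  "subgrp_norm S H = (LEAST m. \<exists>X. finite X \<and> gen X = H \<and> (\<forall>h\<in>X. wordlen S h \<le> m))"

definition isolator :: "'a::ab_group_add set \<Rightarrow> 'a set" where
  "isolator H = {a. \<exists>m::nat. m \<ge> 1 \<and> nsmul m a \<in> H}"

definition index :: "'a::ab_group_add set \<Rightarrow> 'a set \<Rightarrow> nat" where
  "index K H = card {(\<lambda>h. a + h) ` H | a. a \<in> K}"

definition det_sub :: "'a::ab_group_add set \<Rightarrow> nat" where
  "det_sub H = index (isolator H) H"

definition Z_indep :: "'a::ab_group_add set \<Rightarrow> bool" where
  "Z_indep X \<longleftrightarrow> finite X \<and>
     (\<forall>c::'a \<Rightarrow> int. (\<Sum>x\<in>X. zsmul (c x) x) = 0 \<longrightarrow> (\<forall>x\<in>X. c x = 0))"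

definition rankZ :: "'a::ab_group_add set \<Rightarrow> nat" where
  "rankZ H = Sup {card X | X. X \<subseteq> H \<and> Z_indep X}"

end

theory Submission
  imports Defs "HOL-Library.FuncSet"
begin


lemma nsmul_add: "nsmul (m+n) a = nsmul m a + nsmul n a"
  by (induction m) (auto simp: algebra_simps)

lemma nsmul_plus: "nsmul n (a+b) = nsmul n a + nsmul n (b::'a::ab_group_add)"
  by (induction n) (auto simp: algebra_simps)

lemma nsmul_zero[simp]: "nsmul n (0::'a::ab_group_add) = 0"
  by (induction n) auto

lemma nsmul_minus: "nsmul n (-a) = - nsmul n (a::'a::ab_group_add)"
  by (induction n) (auto simp: algebra_simps)

lemma nsmul_mult: "nsmul (m*n) a = nsmul m (nsmul n a)"
  by (induction m) (auto simp: nsmul_add nsmul_plus)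

lemma nsmul_one[simp]: "nsmul 1 a = a"
  by simp

lemma nsmul_diff: "nsmul n (a-b) = nsmul n a - nsmul n (b::'a::ab_group_add)"
  using nsmul_plus[of n a "-b"] nsmul_minus[of n b] by simp

lemma zsmul_diff:
  assumes "int p - int q = i"
  shows "zsmul i a = nsmul p a - nsmul q a"
proof (cases "0 \<le> i")
  case True
  then have "p = nat i + q" using assms by auto
  then show ?thesis using True by (simp add: zsmul_def nsmul_add)
next
  case False
  then have "q = nat (-i) + p" using assms by auto
  then show ?thesis using False by (simp add: zsmul_def nsmul_add)
qed

lemma zsmul_nat[simp]: "zsmul (int n) a = nsmul n a"
  by (simp add: zsmul_def)

lemma zsmul_zero_left[simp]: "zsmul 0 a = 0"
  by (simp add: zsmul_def)

lemma zsmul_one[simp]: "zsmul 1 a = a"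
  by (simp add: zsmul_def)

lemma zsmul_zero_right[simp]: "zsmul i 0 = (0::'a::ab_group_add)"
  by (simp add: zsmul_def)

lemma zsmul_add: "zsmul (i+j) a = zsmul i a + zsmul j a"
proof -
  have "zsmul (i+j) a = nsmul (nat i + nat j) a - nsmul (nat (-i) + nat (-j)) a"
    by (rule zsmul_diff) auto
  moreover have "zsmul i a = nsmul (nat i) a - nsmul (nat (-i)) a" by (rule zsmul_diff) auto
  moreover have "zsmul j a = nsmul (nat j) a - nsmul (nat (-j)) a" by (rule zsmul_diff) auto
  ultimately show ?thesis by (simp only:) (simp add: nsmul_add algebra_simps)
qed

lemma zsmul_neg: "zsmul (-i) a = - zsmul i a"
  using zsmul_add[of i "-i" a] by (simp add: eq_neg_iff_add_eq_0 add.commute)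

lemma zsmul_sub: "zsmul (i-j) a = zsmul i a - zsmul j a"
  using zsmul_add[of i "-j" a] zsmul_neg[of j a] by simp

lemma zsmul_plus: "zsmul i (a+b) = zsmul i a + zsmul i (b::'a::ab_group_add)"
  by (simp add: zsmul_def nsmul_plus)

lemma zsmul_minus: "zsmul i (-a) = - zsmul i (a::'a::ab_group_add)"
  by (simp add: zsmul_def nsmul_minus)

lemma zsmul_minus_right: "zsmul i (a-b) = zsmul i a - zsmul i (b::'a::ab_group_add)"
  using zsmul_plus[of i a "-b"] zsmul_minus[of i b] by simp

lemma nsmul_zsmul: "nsmul n (zsmul i a) = zsmul (int n * i) a"
proof (induction n)
  case 0 then show ?case by simp
next
  case (Suc n)
  have "zsmul (int (Suc n) * i) a = zsmul (i + int n * i) a" by (simp add: algebra_simps)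
  then show ?case using Suc by (simp add: zsmul_add)
qed

lemma zsmul_mult: "zsmul (i*j) a = zsmul i (zsmul j a)"
proof (cases "0 \<le> i")
  case True
  then obtain n where "i = int n" using nonneg_int_cases by blast
  then show ?thesis by (simp add: nsmul_zsmul)
next
  case False
  then obtain n where "i = - int n" by (metis nonneg_int_cases neg_0_le_iff_le nle_le minus_minus)
  then show ?thesis by (simp add: nsmul_zsmul zsmul_neg zsmul_minus)
qed

lemma zsmul_sum: "zsmul i (\<Sum>x\<in>A. f x) = (\<Sum>x\<in>A. zsmul i (f x))"
  by (induction A rule: infinite_finite_induct) (auto simp: zsmul_plus)

lemma nsmul_sum: "nsmul n (\<Sum>x\<in>A. f x) = (\<Sum>x\<in>A. nsmul n (f x))"
  by (induction A rule: infinite_finite_induct) (auto simp: nsmul_plus)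

definition lc :: "'a::ab_group_add set \<Rightarrow> ('a \<Rightarrow> int) \<Rightarrow> 'a" where
  "lc Z c = (\<Sum>z\<in>Z. zsmul (c z) z)"

definition spn :: "'a::ab_group_add set \<Rightarrow> 'a set" where
  "spn Z = range (lc Z)"

lemma lc_add: "lc Z c + lc Z d = lc Z (\<lambda>z. c z + d z)"
  by (simp add: lc_def zsmul_add sum.distrib)

lemma lc_sub: "lc Z c - lc Z d = lc Z (\<lambda>z. c z - d z)"
  by (simp add: lc_def zsmul_sub sum_subtractf)

lemma lc_neg: "- lc Z c = lc Z (\<lambda>z. - c z)"
  by (simp add: lc_def zsmul_neg sum_negf)

lemma lc_zsmul: "zsmul i (lc Z c) = lc Z (\<lambda>z. i * c z)"
  by (simp add: lc_def zsmul_sum zsmul_mult)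

lemma lc_nsmul: "nsmul n (lc Z c) = lc Z (\<lambda>z. int n * c z)"
  by (simp add: lc_def nsmul_sum nsmul_zsmul)

lemma lc_zero: "lc Z (\<lambda>z. 0) = 0"
  by (simp add: lc_def)

lemma lc_cong: "(\<And>z. z \<in> Z \<Longrightarrow> c z = d z) \<Longrightarrow> lc Z c = lc Z d"
  by (simp add: lc_def)

lemma indep_lc_eq:
  assumes "Z_indep Z" "lc Z c = lc Z d" "z \<in> Z"
  shows "c z = d z"
proof -
  have "lc Z (\<lambda>z. c z - d z) = 0" using assms(2) lc_sub[of Z c d] by simp
  then show ?thesis using assms(1,3) unfolding Z_indep_def lc_def by fastforce
qed

lemma indep_lc_zero:
  assumes "Z_indep Z" "lc Z c = 0" "z \<in> Z"
  shows "c z = 0"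
  using assms unfolding Z_indep_def lc_def by blast




lemma subgrp_gen: "subgrp (gen X)"
  unfolding gen_def subgrp_def by blast

lemma gen_sub: "X \<subseteq> gen X"
  unfolding gen_def by blast

lemma gen_least: "subgrp H \<Longrightarrow> X \<subseteq> H \<Longrightarrow> gen X \<subseteq> H"
  unfolding gen_def by blast

lemma subgrp_0: "subgrp H \<Longrightarrow> 0 \<in> H" by (simp add: subgrp_def)
lemma subgrp_add: "subgrp H \<Longrightarrow> a \<in> H \<Longrightarrow> b \<in> H \<Longrightarrow> a + b \<in> H" by (simp add: subgrp_def)
lemma subgrp_neg: "subgrp H \<Longrightarrow> a \<in> H \<Longrightarrow> - a \<in> H" by (simp add: subgrp_def)
lemma subgrp_diff: "subgrp H \<Longrightarrow> a \<in> H \<Longrightarrow> b \<in> H \<Longrightarrow> a - b \<in> H"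
  using subgrp_add[of H a "-b"] subgrp_neg[of H b] by simp
lemma subgrp_neg_iff: "subgrp H \<Longrightarrow> - a \<in> H \<longleftrightarrow> a \<in> H"
  using subgrp_neg[of H a] subgrp_neg[of H "-a"] by auto

lemma subgrp_nsmul: "subgrp H \<Longrightarrow> a \<in> H \<Longrightarrow> nsmul n a \<in> H"
  by (induction n) (auto simp: subgrp_0 subgrp_add)

lemma subgrp_zsmul: "subgrp H \<Longrightarrow> a \<in> H \<Longrightarrow> zsmul i a \<in> H"
  by (simp add: zsmul_def subgrp_nsmul subgrp_neg)

lemma subgrp_sum: "subgrp H \<Longrightarrow> (\<And>x. x \<in> A \<Longrightarrow> f x \<in> H) \<Longrightarrow> (\<Sum>x\<in>A. f x) \<in> H"
  by (induction A rule: infinite_finite_induct) (auto simp: subgrp_0 subgrp_add)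

lemma subgrp_lc: "subgrp H \<Longrightarrow> Z \<subseteq> H \<Longrightarrow> lc Z c \<in> H"
  using subgrp_sum[of H Z "\<lambda>z. zsmul (c z) z"] subgrp_zsmul[of H] by (auto simp: lc_def)

lemma subgrp_UNIV: "subgrp UNIV" by (simp add: subgrp_def)

lemma subgrp_spn: "subgrp (spn Z)"
  unfolding subgrp_def spn_def
proof (intro conjI ballI)
  show "0 \<in> range (lc Z)" using lc_zero[of Z] by (simp add: image_iff) metis
next
  fix x y assume "x \<in> range (lc Z)" "y \<in> range (lc Z)"
  then obtain c d where "x = lc Z c" "y = lc Z d" by blast
  then show "x + y \<in> range (lc Z)" using lc_add[of Z c d] by simp
next
  fix x assume "x \<in> range (lc Z)"
  then obtain c where "x = lc Z c" by blast
  then show "- x \<in> range (lc Z)" using lc_neg[of Z c] by simp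
qed

lemma spn_mem: assumes "finite Z" "z \<in> Z" shows "z \<in> spn Z"
proof -
  have "lc Z (\<lambda>x. if x = z then 1 else 0) = (\<Sum>x\<in>Z. if x = z then z else 0)"
    unfolding lc_def by (rule sum.cong) auto
  also have "\<dots> = z" using assms by simp
  finally show ?thesis unfolding spn_def by (metis UNIV_I image_eqI)
qed

lemma spn_sub_gen: "spn Z \<subseteq> gen Z"
  unfolding spn_def using subgrp_lc[OF subgrp_gen gen_sub] by blast

lemma gen_finite: "finite Z \<Longrightarrow> gen Z = spn Z"
  using gen_least[OF subgrp_spn, of Z Z] spn_mem[of Z] spn_sub_gen[of Z] by blast

lemma spn_mono: assumes "Y \<subseteq> Z" "finite Z" shows "spn Y \<subseteq> spn Z"
proof -
  have "finite Y" using assms finite_subset by blast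
  have "spn Y = gen Y" using gen_finite[OF \<open>finite Y\<close>] by simp
  also have "\<dots> \<subseteq> gen Z" using gen_least[OF subgrp_gen] gen_sub assms(1) by blast
  also have "\<dots> = spn Z" using gen_finite[OF assms(2)] by simp
  finally show ?thesis .
qed

definition msp :: "'a::ab_group_add set \<Rightarrow> 'a set" where
  "msp Y = {a. \<exists>m::nat. m \<ge> 1 \<and> nsmul m a \<in> spn Y}"

lemma msp_I: "m \<ge> 1 \<Longrightarrow> nsmul m a \<in> spn Y \<Longrightarrow> a \<in> msp Y"
  unfolding msp_def by blast

lemma subgrp_msp: "subgrp (msp Y)"
  unfolding subgrp_def
proof (intro conjI ballI)
  show "0 \<in> msp Y" using subgrp_0[OF subgrp_spn] by (intro msp_I[of 1]) simp_all
next
  fix x y assume "x \<in> msp Y" "y \<in> msp Y"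
  then obtain m n where a: "m \<ge> 1" "nsmul m x \<in> spn Y" "n \<ge> 1" "nsmul n y \<in> spn Y"
    unfolding msp_def by blast
  have "nsmul n (nsmul m x) \<in> spn Y" "nsmul m (nsmul n y) \<in> spn Y"
    using a subgrp_nsmul[OF subgrp_spn] by blast+
  then have "nsmul (n*m) x \<in> spn Y" "nsmul (n*m) y \<in> spn Y"
    using nsmul_mult[of n m x] nsmul_mult[of m n y] by (simp_all add: mult.commute[of m n])
  then have "nsmul (n*m) (x+y) \<in> spn Y"
    by (simp only: nsmul_plus subgrp_add[OF subgrp_spn])
  moreover have "n*m \<ge> 1" using a by simp
  ultimately show "x + y \<in> msp Y" by (rule msp_I[rotated])
next
  fix x assume "x \<in> msp Y"
  then obtain m where a: "m \<ge> 1" "nsmul m x \<in> spn Y" unfolding msp_def by blast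
  then show "- x \<in> msp Y"
    by (intro msp_I[of m]) (simp_all add: nsmul_minus subgrp_neg[OF subgrp_spn])
qed



lemma spn_lcI: "lc Y c \<in> spn Y" unfolding spn_def by (rule rangeI)

lemma maxindep_msp:
  assumes "Y \<subseteq> Z" "Z_indep Y"
    and max: "\<And>Y'. Y' \<subseteq> Z \<Longrightarrow> Z_indep Y' \<Longrightarrow> card Y' \<le> card Y"
    and "z \<in> Z"
  shows "z \<in> msp Y"
proof -
  have fY: "finite Y" using assms(2) unfolding Z_indep_def by blast
  show ?thesis
  proof (cases "z \<in> Y")
    case True
    then show ?thesis using spn_mem[OF fY True] by (intro msp_I[of 1]) simp_all
  next
    case False
    have "card (insert z Y) = card Y + 1" using False fY by simp
    then have "\<not> Z_indep (insert z Y)" using max[of "insert z Y"] assms(1,4) by auto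
    then have "\<not> (\<forall>c. lc (insert z Y) c = 0 \<longrightarrow> (\<forall>x\<in>insert z Y. c x = 0))"
      using fY unfolding Z_indep_def lc_def by simp
    then obtain c where c: "lc (insert z Y) c = 0" "\<exists>x\<in>insert z Y. c x \<noteq> 0"
      by blast
    have eq: "lc (insert z Y) c = zsmul (c z) z + lc Y c"
      unfolding lc_def using False fY by simp
    have cz: "c z \<noteq> 0"
    proof
      assume "c z = 0"
      then have "lc Y c = 0" using c eq by simp
      then show False using c(2) \<open>c z = 0\<close> indep_lc_zero[OF assms(2)] by auto
    qed
    have "zsmul (c z) z = - lc Y c"
      using c(1) eq by (simp only: eq_neg_iff_add_eq_0)
    then have zs: "zsmul (c z) z = lc Y (\<lambda>y. - c y)" using lc_neg[of Y c] by simp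
    show ?thesis
    proof (cases "c z > 0")
      case True
      then have "zsmul (c z) z = nsmul (nat (c z)) z" by (simp add: zsmul_def)
      then have "nsmul (nat (c z)) z \<in> spn Y" using zs spn_lcI by metis
      then show ?thesis using True by (intro msp_I) auto
    next
      case False
      then have "zsmul (c z) z = - nsmul (nat (- c z)) z" by (simp add: zsmul_def)
      then have "nsmul (nat (- c z)) z = lc Y c" using zs lc_neg[of Y "\<lambda>y. - c y"] by simp
      then have "nsmul (nat (- c z)) z \<in> spn Y" using spn_lcI by metis
      then show ?thesis using False cz by (intro msp_I) auto
    qed
  qed
qed

lemma exists_maxindep:
  assumes "\<And>Y. Y \<subseteq> Z \<Longrightarrow> Z_indep Y \<Longrightarrow> card Y \<le> b"
  shows "\<exists>Y. Y \<subseteq> Z \<and> Z_indep Y \<and> (\<forall>Y'. Y' \<subseteq> Z \<and> Z_indep Y' \<longrightarrow> card Y' \<le> card Y)"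
proof -
  let ?P = "\<lambda>Y. Y \<subseteq> Z \<and> Z_indep Y"
  have p0: "?P {}" by (simp add: Z_indep_def)
  have bd: "\<forall>Y. ?P Y \<longrightarrow> card Y < b + 1" using assms by (simp add: less_Suc_eq_le)
  obtain Y where "?P Y" "\<forall>Y'. ?P Y' \<longrightarrow> card Y' \<le> card Y"
    using ex_has_greatest_nat[of ?P "{}" card "b+1", OF p0 bd] by blast
  then show ?thesis by blast
qed

lemma msp_gen:
  assumes "X \<subseteq> msp Y" shows "gen X \<subseteq> msp Y"
  using gen_least[OF subgrp_msp assms] .

lemma isolator_I: "m \<ge> 1 \<Longrightarrow> nsmul m a \<in> H \<Longrightarrow> a \<in> isolator H"
  unfolding isolator_def by blast

lemma isolator_subgrp: assumes "subgrp H" shows "subgrp (isolator H)"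
  unfolding subgrp_def
proof (intro conjI ballI)
  show "0 \<in> isolator H" using subgrp_0[OF assms] by (intro isolator_I[of 1]) simp_all
next
  fix x y assume "x \<in> isolator H" "y \<in> isolator H"
  then obtain m n where a: "m \<ge> 1" "nsmul m x \<in> H" "n \<ge> 1" "nsmul n y \<in> H"
    unfolding isolator_def by blast
  have "nsmul n (nsmul m x) \<in> H" "nsmul m (nsmul n y) \<in> H"
    using a subgrp_nsmul[OF assms] by blast+
  then have "nsmul (n*m) x \<in> H" "nsmul (n*m) y \<in> H"
    using nsmul_mult[of n m x] nsmul_mult[of m n y] by (simp_all add: mult.commute[of m n])
  then have "nsmul (n*m) (x+y) \<in> H"
    by (simp only: nsmul_plus subgrp_add[OF assms])
  moreover have "n*m \<ge> 1" using a by simp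
  ultimately show "x + y \<in> isolator H" by (rule isolator_I[rotated])
next
  fix x assume "x \<in> isolator H"
  then obtain m where a: "m \<ge> 1" "nsmul m x \<in> H" unfolding isolator_def by blast
  then show "- x \<in> isolator H"
    by (intro isolator_I[of m]) (simp_all add: nsmul_minus subgrp_neg[OF assms])
qed

lemma isolator_sup: "subgrp H \<Longrightarrow> H \<subseteq> isolator H"
  unfolding isolator_def by (auto intro!: exI[of _ 1])




definition tor :: "'a::ab_group_add set" where
  "tor = {a. \<exists>m::nat. m \<ge> 1 \<and> nsmul m a = 0}"

definition tco :: "'a::ab_group_add set \<Rightarrow> 'a \<Rightarrow> 'a \<Rightarrow> real" where
  "tco Y a = (SOME f. \<exists>m c. m \<ge> 1 \<and> nsmul m a = lc Y c \<and>
      f = (\<lambda>y. if y \<in> Y then real_of_int (c y) / real m else 0))"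

lemma nsmul_comm: "nsmul m (nsmul n a) = nsmul n (nsmul m a)"
  by (metis nsmul_mult mult.commute)

lemma tco_char:
  assumes ind: "Z_indep Y" and m: "m \<ge> 1" and eq: "nsmul m a = lc Y c"
  shows "tco Y a = (\<lambda>y. if y \<in> Y then real_of_int (c y) / real m else 0)"
proof -
  have ex: "\<exists>f m c. m \<ge> 1 \<and> nsmul m a = lc Y c \<and>
      f = (\<lambda>y. if y \<in> Y then real_of_int (c y) / real m else 0)"
    using m eq by blast
  obtain m' c' where m': "m' \<ge> 1" "nsmul m' a = lc Y c'"
    and t: "tco Y a = (\<lambda>y. if y \<in> Y then real_of_int (c' y) / real m' else 0)"
    using someI_ex[OF ex] unfolding tco_def by blast
  have "lc Y (\<lambda>y. int m' * c y) = lc Y (\<lambda>y. int m * c' y)"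
    using nsmul_comm[of m' m a] eq m'(2) lc_nsmul by metis
  then have e: "\<And>y. y \<in> Y \<Longrightarrow> int m' * c y = int m * c' y"
    using indep_lc_eq[OF ind] by blast
  show ?thesis unfolding t
  proof
    fix y
    show "(if y \<in> Y then real_of_int (c' y) / real m' else 0) =
          (if y \<in> Y then real_of_int (c y) / real m else 0)"
    proof (cases "y \<in> Y")
      case True
      then have "real m' * real_of_int (c y) = real m * real_of_int (c' y)"
        using e[OF True] by (metis of_int_mult of_int_of_nat_eq)
      then show ?thesis using True m m'(1) by (simp add: field_simps)
    qed simp
  qed
qed

lemma msp_E:
  assumes "a \<in> msp Y" obtains m c where "m \<ge> 1" "nsmul m a = lc Y c"
  using assms unfolding msp_def spn_def by blast

lemma tco_add:
  assumes ind: "Z_indep Y" and "a \<in> msp Y" "b \<in> msp Y"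
  shows "tco Y (a + b) y = tco Y a y + tco Y b y"
proof -
  obtain m c where mc: "m \<ge> 1" "nsmul m a = lc Y c" using assms(2) by (rule msp_E)
  obtain n d where nd: "n \<ge> 1" "nsmul n b = lc Y d" using assms(3) by (rule msp_E)
  have "nsmul (m*n) (a+b) = nsmul n (nsmul m a) + nsmul m (nsmul n b)"
    by (simp add: nsmul_plus nsmul_mult nsmul_comm[of m n])
  also have "\<dots> = lc Y (\<lambda>y. int n * c y + int m * d y)"
    using mc nd by (simp add: lc_nsmul lc_add)
  finally have e: "nsmul (m*n) (a+b) = lc Y (\<lambda>y. int n * c y + int m * d y)" .
  have "m*n \<ge> 1" using mc nd by simp
  show ?thesis
    unfolding tco_char[OF ind \<open>m*n \<ge> 1\<close> e] tco_char[OF ind mc] tco_char[OF ind nd]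
    using mc(1) nd(1) by (simp add: field_simps)
qed

lemma tco_lc: assumes "Z_indep Y" shows "tco Y (lc Y c) y = (if y \<in> Y then real_of_int (c y) else 0)"
  using tco_char[OF assms, of 1 "lc Y c" c] by simp

lemma tco_zero: assumes "Z_indep Y" shows "tco Y 0 y = 0"
  using tco_lc[OF assms, of "\<lambda>_. 0"] lc_zero[of Y] by simp

lemma tco_neg:
  assumes ind: "Z_indep Y" and "a \<in> msp Y"
  shows "tco Y (- a) y = - tco Y a y"
proof -
  have "- a \<in> msp Y" using assms(2) subgrp_neg[OF subgrp_msp] by blast
  then have "tco Y (a + - a) y = tco Y a y + tco Y (-a) y" using tco_add[OF ind assms(2)] by blast
  then show ?thesis using tco_zero[OF ind] by simp
qed

lemma tco_diff:
  assumes ind: "Z_indep Y" and "a \<in> msp Y" "b \<in> msp Y"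
  shows "tco Y (a - b) y = tco Y a y - tco Y b y"
proof -
  have "- b \<in> msp Y" using assms(3) subgrp_neg[OF subgrp_msp] by blast
  then show ?thesis using tco_add[OF ind assms(2) \<open>-b \<in> msp Y\<close>] tco_neg[OF ind assms(3)] by simp
qed

lemma tco_zero_tor:
  assumes ind: "Z_indep Y" and "a \<in> msp Y" and z: "\<And>y. y \<in> Y \<Longrightarrow> tco Y a y = 0"
  shows "a \<in> tor"
proof -
  obtain m c where mc: "m \<ge> 1" "nsmul m a = lc Y c" using assms(2) by (rule msp_E)
  have "\<And>y. y \<in> Y \<Longrightarrow> c y = 0"
    using z tco_char[OF ind mc] mc(1) by (metis of_int_eq_0_iff divide_eq_0_iff of_nat_eq_0_iff not_one_le_zero)
  then have "lc Y c = 0" using lc_cong[of Y c "\<lambda>_. 0"] lc_zero by metis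
  then show ?thesis using mc unfolding tor_def by auto
qed

lemma tor_tco_zero:
  assumes ind: "Z_indep Y" and "a \<in> tor"
  shows "tco Y a y = 0"
proof -
  obtain m where "m \<ge> 1" "nsmul m a = 0" using assms(2) unfolding tor_def by blast
  then have "nsmul m a = lc Y (\<lambda>_. 0)" using lc_zero by metis
  then show ?thesis using tco_char[OF ind \<open>m \<ge> 1\<close>] by simp
qed

lemma tor_msp: "a \<in> tor \<Longrightarrow> a \<in> msp Y"
  unfolding tor_def using subgrp_0[OF subgrp_spn, of Y] by (auto intro: msp_I)

lemma subgrp_tor: "subgrp (tor::'a::ab_group_add set)"
  unfolding subgrp_def tor_def
proof (intro conjI ballI)
  show "(0::'a) \<in> {a. \<exists>m\<ge>1. nsmul m a = 0}" by (auto intro!: exI[of _ 1])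
next
  fix x y :: 'a assume "x \<in> {a. \<exists>m\<ge>1. nsmul m a = 0}" "y \<in> {a. \<exists>m\<ge>1. nsmul m a = 0}"
  then obtain m n where a: "m \<ge> 1" "nsmul m x = 0" "n \<ge> 1" "nsmul n y = 0" by blast
  have "nsmul (m*n) (x+y) = 0"
    by (simp add: nsmul_plus nsmul_mult nsmul_comm[of m n] a)
  moreover have "m*n \<ge> 1" using a by simp
  ultimately show "x + y \<in> {a. \<exists>m\<ge>1. nsmul m a = 0}" by blast
next
  fix x :: 'a assume "x \<in> {a. \<exists>m\<ge>1. nsmul m a = 0}"
  then show "- x \<in> {a. \<exists>m\<ge>1. nsmul m a = 0}" by (auto simp: nsmul_minus)
qed




locale fgab =
  fixes S :: "'a::ab_group_add set" and E :: "'a set" and M :: nat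
  assumes finS: "finite S" and genS: "gen S = UNIV" and ES: "E \<subseteq> S"
    and indE: "Z_indep E" and M1: "M \<ge> 1" and ME: "\<And>a. nsmul M a \<in> spn E"
begin

lemma finE: "finite E" using indE unfolding Z_indep_def by blast

definition kap :: "'a \<Rightarrow> 'a \<Rightarrow> int" where
  "kap a = (SOME c. nsmul M a = lc E c)"

lemma kap: "nsmul M a = lc E (kap a)"
proof -
  have "\<exists>c. nsmul M a = lc E c" using ME[of a] unfolding spn_def by blast
  then show ?thesis unfolding kap_def by (rule someI_ex)
qed

lemma kap_add: "e \<in> E \<Longrightarrow> kap (a+b) e = kap a e + kap b e"
proof -
  assume e: "e \<in> E"
  have "lc E (kap (a+b)) = lc E (\<lambda>x. kap a x + kap b x)"
    using kap[of "a+b"] kap[of a] kap[of b] by (simp add: nsmul_plus lc_add)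
  then show ?thesis using indep_lc_eq[OF indE _ e] by blast
qed

lemma kap_zero: "e \<in> E \<Longrightarrow> kap 0 e = 0"
  using kap_add[of e 0 0] by simp

lemma kap_neg: "e \<in> E \<Longrightarrow> kap (-a) e = - kap a e"
  using kap_add[of e a "-a"] kap_zero[of e] by simp

lemma kap_diff: "e \<in> E \<Longrightarrow> kap (a-b) e = kap a e - kap b e"
  using kap_add[of e a "-b"] kap_neg[of e b] by simp

lemma kap_nsmul: "e \<in> E \<Longrightarrow> kap (nsmul n a) e = int n * kap a e"
  by (induction n) (simp_all add: kap_zero kap_add algebra_simps)

lemma kap_zsmul: "e \<in> E \<Longrightarrow> kap (zsmul i a) e = i * kap a e"
  by (cases "0 \<le> i") (simp_all add: zsmul_def kap_nsmul kap_neg)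

lemma kap_sum: "e \<in> E \<Longrightarrow> kap (\<Sum>x\<in>A. f x) e = (\<Sum>x\<in>A. kap (f x) e)"
  by (induction A rule: infinite_finite_induct) (simp_all add: kap_zero kap_add)

lemma kap_lc: "e \<in> E \<Longrightarrow> kap (lc Z c) e = (\<Sum>z\<in>Z. c z * kap z e)"
  unfolding lc_def by (simp add: kap_sum kap_zsmul)

lemma tor_iff_kap: "a \<in> tor \<longleftrightarrow> (\<forall>e\<in>E. kap a e = 0)"
proof
  assume "a \<in> tor"
  then obtain m where m: "m \<ge> 1" "nsmul m a = 0" unfolding tor_def by blast
  show "\<forall>e\<in>E. kap a e = 0"
  proof
    fix e assume e: "e \<in> E"
    have "int m * kap a e = 0" using kap_nsmul[OF e, of m a] m(2) kap_zero[OF e] by simp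
    then show "kap a e = 0" using m(1) by simp
  qed
next
  assume "\<forall>e\<in>E. kap a e = 0"
  then have "lc E (kap a) = 0" using lc_cong[of E "kap a" "\<lambda>_. 0"] lc_zero by metis
  then show "a \<in> tor" using kap[of a] M1 unfolding tor_def by auto
qed

definition nrm :: "('a \<Rightarrow> int) \<Rightarrow> int" where
  "nrm v = (\<Sum>e\<in>E. \<bar>v e\<bar>)"

lemma nrm_nonneg: "nrm v \<ge> 0" unfolding nrm_def by (simp add: sum_nonneg)

lemma nrm_ge1: assumes "a \<notin> tor" shows "nrm (kap a) \<ge> 1"
proof -
  obtain e where e: "e \<in> E" "kap a e \<noteq> 0" using assms tor_iff_kap by blast
  have "1 \<le> \<bar>kap a e\<bar>" using e(2) by simp
  also have "\<dots> \<le> nrm (kap a)" unfolding nrm_def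
    by (rule member_le_sum) (use e finE in auto)
  finally show ?thesis .
qed

lemma nrm_add: "nrm (kap (a+b)) \<le> nrm (kap a) + nrm (kap b)"
  unfolding nrm_def sum.distrib[symmetric] by (rule sum_mono) (simp add: kap_add abs_triangle_ineq)

lemma nrm_neg: "nrm (kap (-a)) = nrm (kap a)"
  unfolding nrm_def by (rule sum.cong) (simp_all add: kap_neg)

lemma nrm_diff: "nrm (kap (a-b)) \<le> nrm (kap a) + nrm (kap b)"
  using nrm_add[of a "-b"] nrm_neg[of b] by simp

lemma nrm_lc: "nrm (kap (lc Z c)) \<le> (\<Sum>z\<in>Z. \<bar>c z\<bar> * nrm (kap z))"
proof -
  have "nrm (kap (lc Z c)) = (\<Sum>e\<in>E. \<bar>\<Sum>z\<in>Z. c z * kap z e\<bar>)"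
    unfolding nrm_def by (rule sum.cong) (simp_all add: kap_lc)
  also have "\<dots> \<le> (\<Sum>e\<in>E. \<Sum>z\<in>Z. \<bar>c z\<bar> * \<bar>kap z e\<bar>)"
    by (rule sum_mono) (metis (no_types, lifting) abs_mult sum_abs sum.cong)
  also have "\<dots> = (\<Sum>z\<in>Z. \<bar>c z\<bar> * nrm (kap z))"
    unfolding nrm_def by (subst sum.swap) (simp add: sum_distrib_left)
  finally show ?thesis .
qed

end

lemma fgab_exists:
  fixes S :: "'a::ab_group_add set"
  assumes "finite S" "gen S = UNIV"
  shows "\<exists>E M. fgab S E M"
proof -
  obtain E where E: "E \<subseteq> S" "Z_indep E" "\<forall>Y'. Y' \<subseteq> S \<and> Z_indep Y' \<longrightarrow> card Y' \<le> card E"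
    using exists_maxindep[of S "card S"] assms(1) by (meson card_mono)
  have "\<forall>s\<in>S. \<exists>m. m \<ge> 1 \<and> nsmul m s \<in> spn E"
    using maxindep_msp[OF E(1,2)] E(3) unfolding msp_def by blast
  then obtain f where f: "\<And>s. s \<in> S \<Longrightarrow> f s \<ge> 1 \<and> nsmul (f s) s \<in> spn E" by metis
  define M where "M = (\<Prod>s\<in>S. f s)"
  have M1: "M \<ge> 1" unfolding M_def using f by (simp add: Suc_le_eq prod_pos)
  have MS: "nsmul M s \<in> spn E" if s: "s \<in> S" for s
  proof -
    have "M = (\<Prod>x\<in>S - {s}. f x) * f s" unfolding M_def
      using prod.remove[OF assms(1) s, of f] by (simp add: mult.commute)
    then have "nsmul M s = nsmul (\<Prod>x\<in>S - {s}. f x) (nsmul (f s) s)" by (simp add: nsmul_mult)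
    then show ?thesis using f[OF s] subgrp_nsmul[OF subgrp_spn] by metis
  qed
  have sg: "subgrp {a. nsmul M a \<in> spn E}"
    unfolding subgrp_def using subgrp_spn[of E]
    by (auto simp: nsmul_plus nsmul_minus subgrp_add subgrp_neg subgrp_0)
  have "gen S \<subseteq> {a. nsmul M a \<in> spn E}" using gen_least[OF sg] MS by blast
  then have "\<And>a. nsmul M a \<in> spn E" using assms(2) by blast
  then have "fgab S E M" using assms E M1 by unfold_locales auto
  then show ?thesis by blast
qed




lemma sum_list_neg: "sum_list (map uminus xs) = - sum_list (xs::'a::ab_group_add list)"
  by (induction xs) simp_all

lemma abs_in_range: "\<bar>x::int\<bar> \<le> b \<Longrightarrow> x \<in> {- b..b}"
  by (cases "x \<ge> 0") auto

context fgab begin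

lemma all_lc: "\<exists>k. a = lc S k"
proof -
  have "a \<in> spn S" using genS gen_finite[OF finS] by blast
  then show ?thesis unfolding spn_def by blast
qed

lemma tor_finite: "finite (tor :: 'a set)"
proof -
  define g where "g x = x + lc E (\<lambda>e. - (kap x e) div int M)" for x
  have "tor \<subseteq> g ` (lc S ` (PiE S (\<lambda>_. {0..<int M})))"
  proof
    fix a :: 'a assume a: "a \<in> tor"
    obtain k where k: "a = lc S k" using all_lc by blast
    define r where "r = restrict (\<lambda>s. k s mod int M) S"
    define q where "q s = k s div int M" for s
    have r: "r \<in> PiE S (\<lambda>_. {0..<int M})" unfolding r_def using M1 by auto
    have "lc S k = lc S (\<lambda>s. r s + int M * q s)"
      by (rule lc_cong) (simp add: r_def q_def)
    also have "\<dots> = lc S r + nsmul M (lc S q)"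
      by (simp add: lc_add lc_nsmul)
    finally have ak: "a = lc S r + nsmul M (lc S q)" using k by simp
    have "nsmul M (lc S q) = lc E (\<lambda>e. - (kap (lc S r) e) div int M)"
    proof -
      have "lc E (kap (lc S q)) = lc E (\<lambda>e. - (kap (lc S r) e) div int M)"
      proof (rule lc_cong)
        fix e assume e: "e \<in> E"
        have "kap a e = 0" using a tor_iff_kap e by blast
        then have "kap (lc S r) e = - (int M * kap (lc S q) e)"
          using ak kap_add[OF e] kap_nsmul[OF e] by simp
        then show "kap (lc S q) e = - kap (lc S r) e div int M" using M1 by simp
      qed
      then show ?thesis using kap by simp
    qed
    then have "a = g (lc S r)" using ak unfolding g_def by simp
    then show "a \<in> g ` (lc S ` (PiE S (\<lambda>_. {0..<int M})))" using r by blast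
  qed
  moreover have "finite (PiE S (\<lambda>_. {0..<int M}))" using finS by (intro finite_PiE) auto
  ultimately show ?thesis by (meson finite_imageI finite_subset)
qed

lemma words: "\<exists>xs. set xs \<subseteq> S \<union> uminus ` S \<and> sum_list xs = a"
proof -
  let ?W = "{a. \<exists>xs. set xs \<subseteq> S \<union> uminus ` S \<and> sum_list xs = a}"
  have "subgrp ?W" unfolding subgrp_def
  proof (intro conjI ballI)
    show "0 \<in> ?W" by (auto intro!: exI[of _ "[]"])
  next
    fix x y assume "x \<in> ?W" "y \<in> ?W"
    then obtain xs ys where "set xs \<subseteq> S \<union> uminus ` S" "sum_list xs = x"
      "set ys \<subseteq> S \<union> uminus ` S" "sum_list ys = y" by blast
    then show "x + y \<in> ?W" by (auto intro!: exI[of _ "xs @ ys"])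
  next
    fix x assume "x \<in> ?W"
    then obtain xs where xs: "set xs \<subseteq> S \<union> uminus ` S" "sum_list xs = x" by blast
    have "set (map uminus xs) \<subseteq> S \<union> uminus ` S" using xs(1) by auto
    then show "- x \<in> ?W" using xs(2) sum_list_neg[of xs] by blast
  qed
  moreover have "S \<subseteq> ?W" by (auto intro!: exI[of _ "[s]" for s])
  ultimately have "gen S \<subseteq> ?W" by (rule gen_least)
  then show ?thesis using genS by blast
qed

lemma wordlen_ex: "\<exists>xs. length xs = wordlen S a \<and> set xs \<subseteq> S \<union> uminus ` S \<and> sum_list xs = a"
proof -
  obtain xs where "set xs \<subseteq> S \<union> uminus ` S \<and> sum_list xs = a" using words by blast
  then have "\<exists>n xs. length xs = n \<and> set xs \<subseteq> S \<union> uminus ` S \<and> sum_list xs = a" by blast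
  then show ?thesis unfolding wordlen_def by (rule LeastI_ex)
qed

definition cS :: int where "cS = (\<Sum>s\<in>S. nrm (kap s))"

lemma cS_nonneg: "cS \<ge> 0" unfolding cS_def by (simp add: sum_nonneg nrm_nonneg)

lemma nrm_gen: "x \<in> S \<union> uminus ` S \<Longrightarrow> nrm (kap x) \<le> cS"
proof -
  assume "x \<in> S \<union> uminus ` S"
  then obtain s where s: "s \<in> S" "nrm (kap x) = nrm (kap s)" using nrm_neg by auto
  have "nrm (kap s) \<le> cS" unfolding cS_def
    by (rule member_le_sum) (use s finS nrm_nonneg in auto)
  then show ?thesis using s by simp
qed

lemma nrm_word: "set xs \<subseteq> S \<union> uminus ` S \<Longrightarrow> nrm (kap (sum_list xs)) \<le> int (length xs) * cS"
proof (induction xs)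
  case Nil
  have "nrm (kap 0) = 0" unfolding nrm_def by (simp add: kap_zero)
  then show ?case by simp
next
  case (Cons x xs)
  have "nrm (kap (sum_list (x # xs))) \<le> nrm (kap x) + nrm (kap (sum_list xs))"
    using nrm_add by simp
  also have "\<dots> \<le> cS + int (length xs) * cS" using Cons nrm_gen by (intro add_mono) auto
  finally show ?case by (simp add: algebra_simps)
qed

lemma nrm_wordlen: "nrm (kap a) \<le> int (wordlen S a) * cS"
  using wordlen_ex[of a] nrm_word by metis

lemma wordlen_0: "wordlen S a = 0 \<Longrightarrow> a = 0"
  using wordlen_ex[of a] by auto

lemma kap_bound: "e \<in> E \<Longrightarrow> \<bar>kap a e\<bar> \<le> nrm (kap a)"
  unfolding nrm_def by (rule member_le_sum) (use finE in auto)

lemma grid_bound: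
  assumes "Z_indep Z" and k: "k \<ge> 1"
  shows "k ^ card Z \<le> (2 * k * nat (\<Sum>z\<in>Z. nrm (kap z)) + 1) ^ card E"
proof -
  define w where "w = (\<Sum>z\<in>Z. nrm (kap z))"
  have w0: "w \<ge> 0" unfolding w_def by (simp add: sum_nonneg nrm_nonneg)
  have fZ: "finite Z" using assms(1) unfolding Z_indep_def by blast
  define G where "G = PiE Z (\<lambda>_. {0..<int k})"
  define B where "B = PiE E (\<lambda>_. {- (int k * w)..int k * w})"
  define h where "h a = restrict (kap (lc Z a)) E" for a
  have cG: "card G = k ^ card Z" unfolding G_def using fZ by (simp add: card_PiE)
  obtain wn where wn: "w = int wn" using w0 nonneg_int_cases by blast
  have "card {- (int k * w)..int k * w} = 2 * k * wn + 1" unfolding wn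
    by (simp add: nat_add_distrib nat_mult_distrib)
  then have cB: "card B = (2 * k * nat w + 1) ^ card E" unfolding B_def using finE wn
    by (simp add: card_PiE)
  have fB: "finite B" unfolding B_def using finE by (intro finite_PiE) auto
  have hB: "h ` G \<subseteq> B"
  proof
    fix v assume "v \<in> h ` G"
    then obtain a where a: "a \<in> G" "v = h a" by blast
    have "\<bar>kap (lc Z a) e\<bar> \<le> int k * w" if e: "e \<in> E" for e
    proof -
      have "\<bar>kap (lc Z a) e\<bar> = \<bar>\<Sum>z\<in>Z. a z * kap z e\<bar>" using kap_lc[OF e] by simp
      also have "\<dots> \<le> (\<Sum>z\<in>Z. \<bar>a z\<bar> * \<bar>kap z e\<bar>)"
        using sum_abs[of "\<lambda>z. a z * kap z e" Z] by (simp add: abs_mult)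
      also have "\<dots> \<le> (\<Sum>z\<in>Z. int k * nrm (kap z))"
      proof (rule sum_mono)
        fix z assume z: "z \<in> Z"
        have "a z \<in> {0..<int k}" using a(1) z unfolding G_def by (rule PiE_mem)
        then have "\<bar>a z\<bar> \<le> int k" by simp
        moreover have "\<bar>kap z e\<bar> \<le> nrm (kap z)" using kap_bound[OF e] .
        ultimately show "\<bar>a z\<bar> * \<bar>kap z e\<bar> \<le> int k * nrm (kap z)"
          by (intro mult_mono) auto
      qed
      also have "\<dots> = int k * w" unfolding w_def by (simp add: sum_distrib_left)
      finally show ?thesis .
    qed
    then have "\<And>e. e \<in> E \<Longrightarrow> kap (lc Z a) e \<in> {- (int k * w)..int k * w}"
      using abs_in_range by blast
    then show "v \<in> B" unfolding a(2) h_def B_def by auto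
  qed
  have inj: "inj_on h G"
  proof
    fix a b assume a: "a \<in> G" and b: "b \<in> G" and hab: "h a = h b"
    have "\<forall>e\<in>E. kap (lc Z a - lc Z b) e = 0"
    proof
      fix e assume e: "e \<in> E"
      have "kap (lc Z a) e = kap (lc Z b) e" using fun_cong[OF hab, of e] e unfolding h_def by simp
      then show "kap (lc Z a - lc Z b) e = 0" using kap_diff[OF e] by simp
    qed
    then have "lc Z a - lc Z b \<in> tor" using tor_iff_kap by blast
    then have "lc Z (\<lambda>z. a z - b z) \<in> tor" by (simp only: lc_sub)
    then obtain m where m: "m \<ge> 1" "nsmul m (lc Z (\<lambda>z. a z - b z)) = 0" unfolding tor_def by blast
    then have "lc Z (\<lambda>z. int m * (a z - b z)) = 0" by (simp add: lc_nsmul)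
    then have "\<And>z. z \<in> Z \<Longrightarrow> int m * (a z - b z) = 0" using indep_lc_zero[OF assms(1)] by blast
    then have "\<And>z. z \<in> Z \<Longrightarrow> a z = b z" using m(1) by simp
    moreover have "\<And>z. z \<notin> Z \<Longrightarrow> a z = b z"
      using PiE_arb[OF a[unfolded G_def]] PiE_arb[OF b[unfolded G_def]] by simp
    ultimately show "a = b" by blast
  qed
  have "card G \<le> card B" using card_inj_on_le[OF inj hB fB] .
  then show ?thesis using cG cB unfolding w_def by simp
qed

lemma rank_bound:
  assumes "Z_indep (Z::'a set)" shows "card Z \<le> card E"
proof (rule ccontr)
  assume "\<not> card Z \<le> card E"
  then have q: "card Z \<ge> card E + 1" by simp
  define w where "w = nat (\<Sum>z\<in>Z. nrm (kap z))"
  define p where "p = card E"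
  define k where "k = (2*w+1) ^ p + 1"
  have k1: "k \<ge> 1" unfolding k_def by simp
  have "k ^ (p+1) \<le> k ^ card Z" using q k1 unfolding p_def by (intro power_increasing) auto
  also have "\<dots> \<le> (2 * k * w + 1) ^ p" using grid_bound[OF assms k1] unfolding w_def p_def by simp
  also have "\<dots> \<le> ((2*w+1) * k) ^ p" using k1 by (intro power_mono) (auto simp: algebra_simps)
  finally have c: "k ^ (p+1) \<le> ((2*w+1) * k) ^ p" .
  have "k * k ^ p \<le> (2*w+1) ^ p * k ^ p"
    using c by (metis power_Suc Suc_eq_plus1 power_mult_distrib)
  moreover have "k ^ p > 0" using k1 by simp
  ultimately have "k \<le> (2*w+1) ^ p" using mult_le_cancel2 by blast
  then show False unfolding k_def by simp
qed

end



lemma coset_eq: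
  assumes "subgrp W" "a - b \<in> W"
  shows "(\<lambda>h. a + h) ` W = (\<lambda>h. b + h) ` W"
proof -
  have 1: "(\<lambda>h. a + h) ` W \<subseteq> (\<lambda>h. b + h) ` W" if "subgrp W" "a - b \<in> W" for a b :: 'a
  proof
    fix x assume "x \<in> (\<lambda>h. a + h) ` W"
    then obtain h where h: "h \<in> W" "x = a + h" by blast
    have "(a - b) + h \<in> W" using that h subgrp_add by blast
    moreover have "x = b + ((a - b) + h)" using h by (simp add: algebra_simps)
    ultimately show "x \<in> (\<lambda>h. b + h) ` W" by blast
  qed
  have "b - a \<in> W" using subgrp_neg[OF assms] by (simp add: minus_diff_eq)
  then show ?thesis using 1[OF assms] 1[of b a] assms(1) by blast
qed

context fgab begin

lemma nrm_nsmul: "nrm (kap (nsmul m g)) = int m * nrm (kap g)"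
  unfolding nrm_def by (simp add: kap_nsmul abs_mult sum_distrib_left)

lemma separation:
  assumes indY: "Z_indep Y" and B: "B \<ge> 1" and bd: "\<And>y. y \<in> Y \<Longrightarrow> nrm (kap y) \<le> B"
    and g: "g \<in> msp Y" and small: "\<And>y. y \<in> Y \<Longrightarrow> \<bar>tco Y g y\<bar> < 1 / (real (card Y) * of_int B)"
  shows "g \<in> tor"
proof (rule ccontr)
  assume nt: "g \<notin> tor"
  obtain m c where mc: "m \<ge> 1" "nsmul m g = lc Y c" using g by (rule msp_E)
  have t: "\<And>y. y \<in> Y \<Longrightarrow> tco Y g y = real_of_int (c y) / real m"
    using tco_char[OF indY mc] by simp
  have "int m \<le> int m * nrm (kap g)" using nrm_ge1[OF nt] mc(1) by simp
  also have "\<dots> = nrm (kap (lc Y c))" using nrm_nsmul mc(2) by metis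
  also have "\<dots> \<le> (\<Sum>y\<in>Y. \<bar>c y\<bar> * nrm (kap y))" by (rule nrm_lc)
  also have "\<dots> \<le> (\<Sum>y\<in>Y. \<bar>c y\<bar> * B)" using bd by (intro sum_mono mult_left_mono) auto
  finally have i0: "int m \<le> (\<Sum>y\<in>Y. \<bar>c y\<bar> * B)" .
  then have "real_of_int (int m) \<le> real_of_int (\<Sum>y\<in>Y. \<bar>c y\<bar> * B)" by (simp only: of_int_le_iff)
  then have i1: "real m \<le> (\<Sum>y\<in>Y. real_of_int \<bar>c y\<bar>) * real_of_int B"
    by (simp add: sum_distrib_right)
  show False
  proof (cases "Y = {}")
    case True then show False using i1 mc(1) by simp
  next
    case False
    have fY: "finite Y" using indY Z_indep_def by blast
    have "(\<Sum>y\<in>Y. real_of_int \<bar>c y\<bar>) = (\<Sum>y\<in>Y. real m * \<bar>tco Y g y\<bar>)"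
      using t mc(1) by (intro sum.cong) (simp_all add: abs_div)
    also have "\<dots> < (\<Sum>y\<in>Y. real m * (1 / (real (card Y) * of_int B)))"
    proof (rule sum_strict_mono[OF fY False])
      fix y assume "y \<in> Y"
      then show "real m * \<bar>tco Y g y\<bar> < real m * (1 / (real (card Y) * of_int B))"
        using small mc(1) by (intro mult_strict_left_mono) auto
    qed
    also have "\<dots> = real m / real_of_int B" using False fY B by (simp add: field_simps)
    finally have "(\<Sum>y\<in>Y. real_of_int \<bar>c y\<bar>) * real_of_int B < real m"
      using B by (simp add: field_simps)
    then show False using i1 by simp
  qed
qed

lemma coset_count:
  assumes indY: "Z_indep Y" and sg: "subgrp K" and YK: "Y \<subseteq> K" and KY: "K \<subseteq> msp Y"
    and B: "B \<ge> 1" and bd: "\<And>y. y \<in> Y \<Longrightarrow> nrm (kap y) \<le> B"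
  shows "finite {(\<lambda>h. a + h) ` spn Y | a. a \<in> K} \<and>
         card {(\<lambda>h. a + h) ` spn Y | a. a \<in> K} \<le> card (tor::'a set) * (card Y * nat B) ^ card Y"
proof -
  have fY: "finite Y" using indY Z_indep_def by blast
  define N where "N = card Y * nat B"
  define fr where "fr k y = tco Y k y - of_int \<lfloor>tco Y k y\<rfloor>" for k y
  define cell where "cell k = restrict (\<lambda>y. \<lfloor>fr k y * real N\<rfloor>) Y" for k
  define nk where "nk k = k - lc Y (\<lambda>y. \<lfloor>tco Y k y\<rfloor>)" for k
  define cells where "cells = PiE Y (\<lambda>_. {0..<int N})"
  define rho where "rho v = (SOME k. k \<in> K \<and> cell k = v)" for v
  define F where "F p = (\<lambda>h. (nk (rho (fst p)) + snd p) + h) ` spn Y" for p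
  have fr01: "0 \<le> fr k y" "fr k y < 1" for k y unfolding fr_def by linarith+
  have lcK: "lc Y c \<in> K" for c using subgrp_lc[OF sg YK] .
  have lcmsp: "lc Y c \<in> msp Y" for c using lcK KY by blast
  have nkK: "k \<in> K \<Longrightarrow> nk k \<in> K" for k unfolding nk_def using subgrp_diff[OF sg] lcK by blast
  have tnk: "k \<in> K \<Longrightarrow> y \<in> Y \<Longrightarrow> tco Y (nk k) y = fr k y" for k y
    unfolding nk_def fr_def using tco_diff[OF indY, of k "lc Y _"] KY lcmsp tco_lc[OF indY] by auto
  have coset_nk: "k \<in> K \<Longrightarrow> (\<lambda>h. k + h) ` spn Y = (\<lambda>h. nk k + h) ` spn Y" for k
    by (rule coset_eq[OF subgrp_spn]) (simp add: nk_def spn_def)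
  have cellin: "cell k \<in> cells" for k
  proof -
    have "\<lfloor>fr k y * real N\<rfloor> \<in> {0..<int N}" if "y \<in> Y" for y
    proof -
      have Npos: "N > 0" using that fY B unfolding N_def by (auto simp: card_gt_0_iff)
      have "0 \<le> fr k y * real N" using fr01 by simp
      moreover have "fr k y * real N < real N" using fr01[of k y] Npos by simp
      ultimately show ?thesis by (simp add: floor_less_iff)
    qed
    then show ?thesis unfolding cells_def cell_def by auto
  qed
  have same: "nk k - nk k' \<in> tor" if k: "k \<in> K" "k' \<in> K" and c: "cell k = cell k'" for k k'
  proof (rule separation[OF indY B bd])
    show "nk k - nk k' \<in> msp Y" using nkK k subgrp_diff[OF sg] KY by blast
  next
    fix y assume y: "y \<in> Y"
    have Npos: "N > 0" using y fY B unfolding N_def by (auto simp: card_gt_0_iff)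
    have "\<lfloor>fr k y * real N\<rfloor> = \<lfloor>fr k' y * real N\<rfloor>" using fun_cong[OF c, of y] y unfolding cell_def by simp
    then have "\<bar>fr k y * real N - fr k' y * real N\<bar> < 1" by linarith
    then have "\<bar>fr k y - fr k' y\<bar> * real N < 1" by (simp add: left_diff_distrib[symmetric] abs_mult)
    then have "\<bar>fr k y - fr k' y\<bar> < 1 / real N" using Npos by (simp add: field_simps)
    moreover have "tco Y (nk k - nk k') y = fr k y - fr k' y"
    proof -
      have "nk k \<in> msp Y" "nk k' \<in> msp Y" using nkK k KY by blast+
      then show ?thesis using tco_diff[OF indY] tnk[OF k(1) y] tnk[OF k(2) y] by simp
    qed
    moreover have "real N = real (card Y) * of_int B" unfolding N_def using B by simp
    ultimately show "\<bar>tco Y (nk k - nk k') y\<bar> < 1 / (real (card Y) * of_int B)" by simp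
  qed
  have sub: "{(\<lambda>h. a + h) ` spn Y | a. a \<in> K} \<subseteq> F ` (cells \<times> tor)"
  proof
    fix C assume "C \<in> {(\<lambda>h. a + h) ` spn Y | a. a \<in> K}"
    then obtain a where a: "a \<in> K" "C = (\<lambda>h. a + h) ` spn Y" by blast
    have ex: "\<exists>k. k \<in> K \<and> cell k = cell a" using a by blast
    have r: "rho (cell a) \<in> K" "cell (rho (cell a)) = cell a"
      using someI_ex[OF ex] unfolding rho_def by blast+
    define tau where "tau = nk a - nk (rho (cell a))"
    have tau: "tau \<in> tor" unfolding tau_def using same[OF a(1) r(1)] r(2) by simp
    have "C = (\<lambda>h. nk a + h) ` spn Y" using a coset_nk by simp
    also have "\<dots> = F (cell a, tau)" unfolding F_def tau_def by simp
    finally show "C \<in> F ` (cells \<times> tor)" using tau cellin by blast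
  qed
  have fc: "finite cells" unfolding cells_def using fY by (intro finite_PiE) auto
  have cc: "card cells = N ^ card Y" unfolding cells_def using fY by (simp add: card_PiE)
  have fin: "finite (F ` (cells \<times> tor))" using fc tor_finite by simp
  have "card {(\<lambda>h. a + h) ` spn Y | a. a \<in> K} \<le> card (F ` (cells \<times> tor))"
    by (rule card_mono[OF fin sub])
  also have "\<dots> \<le> card (cells \<times> (tor::'a set))" using fc tor_finite by (intro card_image_le) simp
  also have "\<dots> = card (tor::'a set) * N ^ card Y" using cc fc tor_finite by (simp add: card_cartesian_product)
  finally show ?thesis using finite_subset[OF sub fin] unfolding N_def by simp
qed

end



lemma indep_no_zero: assumes "Z_indep X" shows "0 \<notin> X"
proof
  assume z: "0 \<in> X"
  have "lc X (\<lambda>x. if x = 0 then 1 else 0) = 0"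
    unfolding lc_def by (rule sum.neutral) simp
  from indep_lc_zero[OF assms this z] show False by simp
qed

context fgab begin

lemma indep_bdd: "bdd_above {card X | X. X \<subseteq> H \<and> Z_indep (X::'a set)}"
  by (rule bdd_aboveI[of _ "card E"]) (auto intro: rank_bound)

lemma rank_ge: "Y \<subseteq> H \<Longrightarrow> Z_indep (Y::'a set) \<Longrightarrow> card Y \<le> rankZ H"
  unfolding rankZ_def by (rule cSup_upper) (auto intro: indep_bdd)

lemma subgrp_fg:
  assumes sg: "subgrp (H::'a set)" shows "\<exists>X. finite X \<and> gen X = H"
proof -
  obtain Y where Y: "Y \<subseteq> H" "Z_indep Y" "\<forall>Y'. Y' \<subseteq> H \<and> Z_indep Y' \<longrightarrow> card Y' \<le> card Y"
    using exists_maxindep[of H "card E"] rank_bound by blast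
  have HY: "H \<subseteq> msp Y" using maxindep_msp[OF Y(1,2)] Y(3) by blast
  define B where "B = 1 + (\<Sum>y\<in>Y. nrm (kap y))"
  have fY: "finite Y" using Y(2) Z_indep_def by blast
  have bd: "nrm (kap y) \<le> B" if y: "y \<in> Y" for y
  proof -
    have "nrm (kap y) \<le> (\<Sum>y\<in>Y. nrm (kap y))" by (rule member_le_sum) (use y fY nrm_nonneg in auto)
    then show ?thesis unfolding B_def by linarith
  qed
  have B1: "B \<ge> 1" unfolding B_def by (simp add: sum_nonneg nrm_nonneg)
  define Q where "Q = {(\<lambda>h. a + h) ` spn Y | a. a \<in> H}"
  have fQ: "finite Q" using coset_count[OF Y(2) sg Y(1) HY B1 bd] unfolding Q_def by blast
  define rep where "rep C = (SOME a. a \<in> H \<and> C = (\<lambda>h. a + h) ` spn Y)" for C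
  define X where "X = Y \<union> rep ` Q"
  have repQ: "rep C \<in> H \<and> C = (\<lambda>h. rep C + h) ` spn Y" if "C \<in> Q" for C
  proof -
    have "\<exists>a. a \<in> H \<and> C = (\<lambda>h. a + h) ` spn Y" using that unfolding Q_def by blast
    then show ?thesis unfolding rep_def by (rule someI_ex)
  qed
  have XH: "X \<subseteq> H" unfolding X_def using Y(1) repQ by blast
  have "H \<subseteq> gen X"
  proof
    fix h assume h: "h \<in> H"
    let ?C = "(\<lambda>x. h + x) ` spn Y"
    have C: "?C \<in> Q" unfolding Q_def using h by blast
    have "h \<in> ?C" using subgrp_0[OF subgrp_spn, of Y] by (metis add_0_right image_eqI)
    then obtain w where w: "w \<in> spn Y" "h = rep ?C + w" using repQ[OF C] by auto
    have "w \<in> gen X" using w(1) spn_sub_gen[of Y] gen_least[OF subgrp_gen, of Y X] gen_sub[of X]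
      unfolding X_def by blast
    moreover have "rep ?C \<in> gen X" using C gen_sub[of X] unfolding X_def by blast
    ultimately show "h \<in> gen X" using w(2) subgrp_add[OF subgrp_gen] by metis
  qed
  moreover have "gen X \<subseteq> H" using gen_least[OF sg XH] .
  moreover have "finite X" unfolding X_def using fY fQ by simp
  ultimately show ?thesis by blast
qed

lemma norm_witness:
  assumes "subgrp (H::'a set)"
  shows "\<exists>X. finite X \<and> gen X = H \<and> (\<forall>h\<in>X. wordlen S h \<le> subgrp_norm S H)"
proof -
  obtain X where X: "finite X" "gen X = H" using subgrp_fg[OF assms] by blast
  have "\<forall>h\<in>X. wordlen S h \<le> (\<Sum>x\<in>X. wordlen S x)"
    using X(1) by (intro ballI member_le_sum) auto
  then have "\<exists>m X. finite X \<and> gen X = H \<and> (\<forall>h\<in>X. wordlen S h \<le> m)" using X by blast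
  then show ?thesis unfolding subgrp_norm_def by (rule LeastI_ex)
qed

definition D :: nat where "D = (card E + 1) * (nat cS + 1)"
definition C0 :: nat where "C0 = card (tor::'a set) * D ^ card E"

lemma main_bound:
  assumes sg: "subgrp (H::'a set)"
  shows "det_sub H \<le> C0 * subgrp_norm S H ^ rankZ H"
proof -
  define n where "n = subgrp_norm S H"
  obtain X where X: "finite X" "gen X = H" "\<And>h. h \<in> X \<Longrightarrow> wordlen S h \<le> n"
    using norm_witness[OF sg] unfolding n_def by blast
  have XH: "X \<subseteq> H" using X(2) gen_sub by blast
  obtain Y where Y: "Y \<subseteq> X" "Z_indep Y" "\<forall>Y'. Y' \<subseteq> X \<and> Z_indep Y' \<longrightarrow> card Y' \<le> card Y"
    using exists_maxindep[of X "card E"] rank_bound by blast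
  have fY: "finite Y" using Y(2) Z_indep_def by blast
  have HY: "H \<subseteq> msp Y" using msp_gen[of X Y] maxindep_msp[OF Y(1,2)] Y(3) X(2) by blast
  define K where "K = isolator H"
  have sgK: "subgrp K" unfolding K_def using isolator_subgrp[OF sg] .
  have HK: "H \<subseteq> K" unfolding K_def using isolator_sup[OF sg] .
  have KY: "K \<subseteq> msp Y"
  proof
    fix k assume "k \<in> K"
    then obtain m where m: "m \<ge> 1" "nsmul m k \<in> H" unfolding K_def isolator_def by blast
    then obtain m' where m': "m' \<ge> 1" "nsmul m' (nsmul m k) \<in> spn Y" using HY unfolding msp_def by blast
    then have "nsmul (m' * m) k \<in> spn Y" by (simp add: nsmul_mult)
    then show "k \<in> msp Y" using m m' by (intro msp_I[of "m'*m"]) auto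
  qed
  define B where "B = 1 + int n * cS"
  have B1: "B \<ge> 1" unfolding B_def using cS_nonneg by simp
  have bd: "nrm (kap y) \<le> B" if y: "y \<in> Y" for y
  proof -
    have "nrm (kap y) \<le> int (wordlen S y) * cS" by (rule nrm_wordlen)
    also have "\<dots> \<le> int n * cS" using X(3) y Y(1) cS_nonneg by (intro mult_right_mono) auto
    finally show ?thesis unfolding B_def by simp
  qed
  define QK where "QK = {(\<lambda>h. a + h) ` spn Y | a. a \<in> K}"
  have cc: "finite QK \<and> card QK \<le> card (tor::'a set) * (card Y * nat B) ^ card Y"
    using coset_count[OF Y(2) sgK _ KY B1 bd] Y(1) XH HK unfolding QK_def by blast
  have spnH: "spn Y \<subseteq> H" using spn_sub_gen[of Y] gen_least[OF sg] Y(1) XH by blast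
  define G where "G C = (\<Union>c\<in>C. (\<lambda>h. c + h) ` H)" for C :: "'a set"
  have Gcos: "G ((\<lambda>h. a + h) ` spn Y) = (\<lambda>h. a + h) ` H" for a
  proof -
    have wH: "(\<lambda>h. (a + w) + h) ` H = (\<lambda>h. a + h) ` H" if "w \<in> spn Y" for w
      using that spnH by (intro coset_eq[OF sg]) auto
    have "0 \<in> spn Y" using subgrp_0[OF subgrp_spn] .
    have "G ((\<lambda>h. a + h) ` spn Y) = (\<Union>w\<in>spn Y. (\<lambda>h. (a + w) + h) ` H)"
      unfolding G_def by (simp add: image_image)
    also have "\<dots> = (\<Union>w\<in>spn Y. (\<lambda>h. a + h) ` H)"
      using wH by (intro SUP_cong) auto
    also have "\<dots> = (\<lambda>h. a + h) ` H" using \<open>0 \<in> spn Y\<close> by auto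
    finally show ?thesis .
  qed
  have eqQ: "{(\<lambda>h. a + h) ` H | a. a \<in> K} = G ` QK" unfolding QK_def using Gcos by auto
  have "det_sub H = card (G ` QK)"
    unfolding det_sub_def index_def K_def[symmetric] eqQ ..
  also have "\<dots> \<le> card QK" using cc by (intro card_image_le) blast
  finally have "det_sub H \<le> card QK" .
  also have "\<dots> \<le> card (tor::'a set) * (card Y * nat B) ^ card Y" using cc by blast
  finally have d1: "det_sub H \<le> card (tor::'a set) * (card Y * nat B) ^ card Y" .
  have rY: "card Y \<le> rankZ H" using rank_ge[OF _ Y(2)] Y(1) XH by blast
  have rE: "card Y \<le> card E" using rank_bound[OF Y(2)] .
  have D1: "D \<ge> 1" unfolding D_def by simp
  show ?thesis
  proof (cases "n = 0")
    case True
    then have "X \<subseteq> {0}" using X(3) wordlen_0 by blast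
    then have "H \<subseteq> {0}" using X(2) gen_least[of "{0}" X] by (simp add: subgrp_def)
    then have ind0: "\<And>Z. Z \<subseteq> H \<Longrightarrow> Z_indep Z \<Longrightarrow> Z = {}" using indep_no_zero by blast
    then have "Y = {}" using Y(1,2) XH by blast
    have "{card Z | Z. Z \<subseteq> H \<and> Z_indep Z} = {0}"
      using ind0 by (auto intro!: exI[of _ "{}"] simp: Z_indep_def)
    then have "rankZ H = 0" unfolding rankZ_def by simp
    moreover have "card (tor::'a set) \<le> C0" unfolding C0_def using D1 by simp
    ultimately show ?thesis using d1 \<open>Y = {}\<close> unfolding n_def by simp
  next
    case False
    have "card Y * nat B \<le> D * n"
    proof -
      obtain cs where cs: "cS = int cs" using cS_nonneg nonneg_int_cases by blast
      have "nat B = 1 + n * cs" unfolding B_def cs by (simp add: nat_add_distrib nat_mult_distrib)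
      also have "\<dots> \<le> (cs + 1) * n" using False by (simp add: algebra_simps)
      finally have "nat B \<le> (nat cS + 1) * n" using cs by simp
      moreover have "card Y \<le> card E + 1" using rE by simp
      ultimately have "card Y * nat B \<le> (card E + 1) * ((nat cS + 1) * n)" using mult_le_mono by metis
      then show ?thesis unfolding D_def by (simp only: mult.assoc)
    qed
    then have "(card Y * nat B) ^ card Y \<le> (D * n) ^ card Y" by (rule power_mono) simp
    also have "\<dots> = D ^ card Y * n ^ card Y" by (simp add: power_mult_distrib)
    also have "\<dots> \<le> D ^ card E * n ^ rankZ H"
      using D1 False rE rY by (intro mult_mono power_increasing) auto
    finally have "card (tor::'a set) * (card Y * nat B) ^ card Y \<le> card (tor::'a set) * (D ^ card E * n ^ rankZ H)"
      by (rule mult_le_mono2)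
    then have "det_sub H \<le> card (tor::'a set) * (D ^ card E * n ^ rankZ H)" using d1 by (rule order_trans[rotated])
    then show ?thesis unfolding C0_def n_def by (simp add: mult.assoc)
  qed
qed

lemma C0_pos: "C0 > 0"
proof -
  have "(0::'a) \<in> tor" unfolding tor_def by (auto intro!: exI[of _ 1])
  then have "card (tor::'a set) > 0" using tor_finite card_gt_0_iff by blast
  then show ?thesis unfolding C0_def D_def by simp
qed

end

theorem mainTheorem9:
  fixes S :: "'a::ab_group_add set"
  assumes "finite S" and "gen S = UNIV"
  shows "\<exists>C::real. C > 0 \<and>
    (\<forall>H. subgrp H \<longrightarrow> real (det_sub H) \<le> C * real (subgrp_norm S H) ^ rankZ H)"
proof -
  obtain E M where fg: "fgab S E M" using fgab_exists[OF assms] by blast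
  show ?thesis
  proof (intro exI[of _ "real (fgab.C0 S E M)"] conjI allI impI)
    show "real (fgab.C0 S E M) > 0" using fgab.C0_pos[OF fg] by simp
  next
    fix H :: "'a set" assume "subgrp H"
    then have "det_sub H \<le> fgab.C0 S E M * subgrp_norm S H ^ rankZ H"
      using fgab.main_bound[OF fg] by blast
    then have "real (det_sub H) \<le> real (fgab.C0 S E M * subgrp_norm S H ^ rankZ H)"
      by (simp only: of_nat_le_iff)
    then show "real (det_sub H) \<le> real (fgab.C0 S E M) * real (subgrp_norm S H) ^ rankZ H"
      by simp
  qed
qed


end
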